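(* Let $\mathcal D$ be universal, $\mathrm M=(M,d)\in\mathfrak U_{\mathcal D}$, and let $r\in\mathcal D$, $r>0$, be such that no element of $\mathcal D$ lies in the interval $(r,2r]$. Then the relation $x\sim_r y\iff d(x,y)\le r$ is an equivalence relation on $M$, and for any two distinct $\sim_r$-classes $A\ne B$, any $a\in A$ and any $n\in d(A,B)$: (1) $n>2r$; (2) there exists $b\in B$ with $d(a,b)=n$; (3) $d_{\max}(A,B)-d_{\min}(A,B)\le r$.
   Context: $\mathcal D$ is a finite subset of $\mathbb R_{\ge0}$ containing $0$. $\mathfrak U_{\mathcal D}$ is the class of countable homogeneous metric spaces (every isometry between finite subspaces extends to an isometry of the space onto itself) with distance set exactly $\mathcal D$ into which every finite metric space with distances in $\mathcal D$ embeds isometrically; $\mathcal D$ is universal if this class is nonempty. For subsets $A,B\subseteq M$: $d(A,B)=\{d(a,b):a\in A,b\in B\}$, $d_{\min}(A,B)=\min d(A,B)$, $d_{\max}(A,B)=\max d(A,B)$. *)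

theory Defs
  imports Complex_Main "HOL-Library.Countable_Set"
begin

definition metric_on :: "'a set \<Rightarrow> ('a \<Rightarrow> 'a \<Rightarrow> real) \<Rightarrow> bool" where
  "metric_on M d \<longleftrightarrow>
     (\<forall>x\<in>M. \<forall>y\<in>M. 0 \<le> d x y \<and> (d x y = 0 \<longleftrightarrow> x = y) \<and> d x y = d y x) \<and>
     (\<forall>x\<in>M. \<forall>y\<in>M. \<forall>z\<in>M. d x z \<le> d x y + d y z)"

definition dist_set :: "'a set \<Rightarrow> ('a \<Rightarrow> 'a \<Rightarrow> real) \<Rightarrow> real set" where
  "dist_set M d = {d x y | x y. x \<in> M \<and> y \<in> M}"

definition dAB :: "('a \<Rightarrow> 'a \<Rightarrow> real) \<Rightarrow> 'a set \<Rightarrow> 'a set \<Rightarrow> real set" where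
  "dAB d A B = {d a b | a b. a \<in> A \<and> b \<in> B}"

definition homogeneous :: "'a set \<Rightarrow> ('a \<Rightarrow> 'a \<Rightarrow> real) \<Rightarrow> bool" where
  "homogeneous M d \<longleftrightarrow>
     (\<forall>F f. finite F \<and> F \<subseteq> M \<and> f ` F \<subseteq> M \<and> (\<forall>x\<in>F. \<forall>y\<in>F. d (f x) (f y) = d x y) \<longrightarrow>
        (\<exists>g. bij_betw g M M \<and> (\<forall>x\<in>M. \<forall>y\<in>M. d (g x) (g y) = d x y) \<and> (\<forall>x\<in>F. g x = f x)))"

text \<open>Every finite metric space with distances in D embeds isometrically.
  Finite metric spaces are represented (up to isometry) on carriers {..<n}.\<close>
definition embeds_all_finite :: "real set \<Rightarrow> 'a set \<Rightarrow> ('a \<Rightarrow> 'a \<Rightarrow> real) \<Rightarrow> bool" where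
  "embeds_all_finite D M d \<longleftrightarrow>
     (\<forall>(n::nat) e. metric_on {..<n} e \<and> dist_set {..<n} e \<subseteq> D \<longrightarrow>
        (\<exists>h. h ` {..<n} \<subseteq> M \<and> (\<forall>i<n. \<forall>j<n. d (h i) (h j) = e i j)))"

definition in_UD :: "real set \<Rightarrow> 'a set \<Rightarrow> ('a \<Rightarrow> 'a \<Rightarrow> real) \<Rightarrow> bool" where
  "in_UD D M d \<longleftrightarrow> metric_on M d \<and> countable M \<and> homogeneous M d \<and>
     dist_set M d = D \<and> embeds_all_finite D M d"

text \<open>D is universal iff U_D is nonempty (countable spaces encoded on subsets of nat).\<close>
definition universal_dset :: "real set \<Rightarrow> bool" where
  "universal_dset D \<longleftrightarrow> (\<exists>(M::nat set) d. in_UD D M d)"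

end

theory Submission
  imports Defs
begin

definition e4 :: "real \<Rightarrow> real \<Rightarrow> real \<Rightarrow> nat \<Rightarrow> nat \<Rightarrow> real" where
  "e4 s n m i j = (if i = j then 0
     else if (i,j) \<in> {(0,1),(1,0),(2,3),(3,2)} then s
     else if (i,j) \<in> {(0,2),(2,0),(1,3),(3,1)} then n else m)"

lemma lt4: "(i::nat) < 4 \<Longrightarrow> i = 0 \<or> i = 1 \<or> i = 2 \<or> i = 3" by auto

lemma e4_metric:
  assumes "s > 0" "n > 0" "m > 0" "s \<le> n + m" "n \<le> s + m" "m \<le> s + n"
  shows "metric_on {..<4} (e4 s n m)"
  unfolding metric_on_def
proof (intro conjI ballI)
  fix x y assume "x \<in> {..<(4::nat)}" "y \<in> {..<(4::nat)}"
  then have "x = 0 \<or> x = 1 \<or> x = 2 \<or> x = 3" "y = 0 \<or> y = 1 \<or> y = 2 \<or> y = 3" by auto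
  then show "0 \<le> e4 s n m x y" "(e4 s n m x y = 0) = (x = y)" "e4 s n m x y = e4 s n m y x"
    using assms by (auto simp: e4_def)
next
  fix x y z assume "x \<in> {..<(4::nat)}" "y \<in> {..<(4::nat)}" "z \<in> {..<(4::nat)}"
  then have "x = 0 \<or> x = 1 \<or> x = 2 \<or> x = 3" "y = 0 \<or> y = 1 \<or> y = 2 \<or> y = 3"
     "z = 0 \<or> z = 1 \<or> z = 2 \<or> z = 3" by auto
  then show "e4 s n m x z \<le> e4 s n m x y + e4 s n m y z"
    using assms by (auto simp: e4_def)
qed

lemma e4_dist: "dist_set {..<4} (e4 s n m) \<subseteq> {0, s, n, m}"
  unfolding dist_set_def e4_def by auto

lemma met_facts:
  assumes "metric_on M d"
  shows "\<And>x y. x \<in> M \<Longrightarrow> y \<in> M \<Longrightarrow> 0 \<le> d x y"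
    "\<And>x y. x \<in> M \<Longrightarrow> y \<in> M \<Longrightarrow> d x y = 0 \<longleftrightarrow> x = y"
    "\<And>x y. x \<in> M \<Longrightarrow> y \<in> M \<Longrightarrow> d x y = d y x"
    "\<And>x y z. x \<in> M \<Longrightarrow> y \<in> M \<Longrightarrow> z \<in> M \<Longrightarrow> d x z \<le> d x y + d y z"
  using assms unfolding metric_on_def by blast+

lemma four_point:
  assumes U: "in_UD D M d" and x: "x0 \<in> M" "x1 \<in> M" "x2 \<in> M"
    and dist: "x0 \<noteq> x1" "x0 \<noteq> x2" "x1 \<noteq> x2"
  shows "\<exists>y\<in>M. d x1 y = d x0 x2 \<and> d x2 y = d x0 x1"
proof -
  have UU: "metric_on M d \<and> countable M \<and> homogeneous M d \<and> dist_set M d = D \<and> embeds_all_finite D M d"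
    using U unfolding in_UD_def .
  have met: "metric_on M d" using UU by (rule conjunct1)
  have hom: "homogeneous M d" using UU by (simp only:)
  have ds: "dist_set M d = D" using UU by (simp only:)
  have emb: "embeds_all_finite D M d" using UU by (simp only:)
  note nn = met_facts(1)[OF met] and z = met_facts(2)[OF met] and sy = met_facts(3)[OF met]
    and tr = met_facts(4)[OF met]
  define s where "s = d x0 x1"
  define n where "n = d x0 x2"
  define m where "m = d x1 x2"
  have p1: "d x0 x1 \<noteq> 0" using z[OF x(1) x(2)] dist(1) by simp
  have p2: "d x0 x2 \<noteq> 0" using z[OF x(1) x(3)] dist(2) by simp
  have p3: "d x1 x2 \<noteq> 0" using z[OF x(2) x(3)] dist(3) by simp
  have pos: "s > 0" "n > 0" "m > 0" unfolding s_def n_def m_def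
    using nn[OF x(1) x(2)] nn[OF x(1) x(3)] nn[OF x(2) x(3)] p1 p2 p3 by linarith+
  have tri: "s \<le> n + m" "n \<le> s + m" "m \<le> s + n" unfolding s_def n_def m_def
    using tr[OF x(1) x(3) x(2)] tr[OF x(1) x(2) x(3)] tr[OF x(2) x(1) x(3)]
      sy[OF x(1) x(2)] sy[OF x(2) x(3)] by linarith+
  have d0: "d x0 x0 = 0" using z[OF x(1) x(1)] by simp
  have dsD: "\<And>a b. a \<in> M \<Longrightarrow> b \<in> M \<Longrightarrow> d a b \<in> D"
    unfolding ds[symmetric] dist_set_def by blast
  have inD: "s \<in> D" "n \<in> D" "m \<in> D" "0 \<in> D"
    unfolding s_def n_def m_def using dsD[OF x(1) x(2)] dsD[OF x(1) x(3)] dsD[OF x(2) x(3)]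
      dsD[OF x(1) x(1)] d0 by simp_all
  have em: "metric_on {..<4} (e4 s n m)" by (rule e4_metric[OF pos tri])
  moreover have ed: "dist_set {..<4} (e4 s n m) \<subseteq> D" using e4_dist inD by blast
  have "\<exists>h. h ` {..<4} \<subseteq> M \<and> (\<forall>i<4. \<forall>j<4. d (h i) (h j) = e4 s n m i j)"
    by (rule emb[unfolded embeds_all_finite_def, rule_format, OF conjI[OF em ed]])
  then obtain h where h1: "h ` {..<4} \<subseteq> M" and h2: "\<forall>i<4. \<forall>j<4. d (h i) (h j) = e4 s n m i j"
    by (elim exE conjE)
  have h: "h ` {..<4} \<subseteq> M" "\<And>i j. i<4 \<Longrightarrow> j<4 \<Longrightarrow> d (h i) (h j) = e4 s n m i j"
    using h1 h2 by simp_all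
  have hM: "h 0 \<in> M" "h 1 \<in> M" "h 2 \<in> M" "h 3 \<in> M" using h(1) by auto
  have h01: "d (h 0) (h 1) = s" and h02: "d (h 0) (h 2) = n" and h12: "d (h 1) (h 2) = m"
    and h13: "d (h 1) (h 3) = n" and h23: "d (h 2) (h 3) = s"
    using h(2)[of 0 1] h(2)[of 0 2] h(2)[of 1 2] h(2)[of 1 3] h(2)[of 2 3]
    by (auto simp: e4_def)
  have hd1: "h 0 \<noteq> h 1" using z[OF hM(1) hM(2)] h01 pos(1) by auto
  have hd2: "h 0 \<noteq> h 2" using z[OF hM(1) hM(3)] h02 pos(2) by auto
  have hd3: "h 1 \<noteq> h 2" using z[OF hM(2) hM(3)] h12 pos(3) by auto
  note hd = hd1 hd2 hd3
  define F where "F = {h 0, h 1, h 2}"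
  define f where "f = (\<lambda>z. if z = h 0 then x0 else if z = h 1 then x1 else x2)"
  have f0: "f (h 0) = x0" and f1: "f (h 1) = x1" and f2: "f (h 2) = x2"
    using hd unfolding f_def by auto
  have "finite F" "F \<subseteq> M" "f ` F \<subseteq> M" using hM x f0 f1 f2 unfolding F_def by auto
  moreover have "\<forall>u\<in>F. \<forall>v\<in>F. d (f u) (f v) = d u v"
  proof (intro ballI)
    fix u v assume "u \<in> F" "v \<in> F"
    moreover have "d x0 x0 = d (h 0) (h 0)" using z[OF x(1) x(1)] z[OF hM(1) hM(1)] by simp
    moreover have "d x1 x1 = d (h 1) (h 1)" using z[OF x(2) x(2)] z[OF hM(2) hM(2)] by simp
    moreover have "d x2 x2 = d (h 2) (h 2)" using z[OF x(3) x(3)] z[OF hM(3) hM(3)] by simp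
    moreover have "d x1 x0 = d (h 1) (h 0)" using sy[OF x(1) x(2)] sy[OF hM(1) hM(2)] h01 s_def by simp
    moreover have "d x2 x0 = d (h 2) (h 0)" using sy[OF x(1) x(3)] sy[OF hM(1) hM(3)] h02 n_def by simp
    moreover have "d x2 x1 = d (h 2) (h 1)" using sy[OF x(2) x(3)] sy[OF hM(2) hM(3)] h12 m_def by simp
    ultimately show "d (f u) (f v) = d u v"
      unfolding F_def using f0 f1 f2 h01 h02 h12 s_def n_def m_def by auto
  qed
  ultimately have "finite F \<and> F \<subseteq> M \<and> f ` F \<subseteq> M \<and> (\<forall>u\<in>F. \<forall>v\<in>F. d (f u) (f v) = d u v)"
    by (intro conjI)
  then have "\<exists>g. bij_betw g M M \<and> (\<forall>x\<in>M. \<forall>y\<in>M. d (g x) (g y) = d x y) \<and> (\<forall>x\<in>F. g x = f x)"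
    by (rule hom[unfolded homogeneous_def, rule_format])
  then obtain g where g: "bij_betw g M M" "\<forall>u\<in>M. \<forall>v\<in>M. d (g u) (g v) = d u v"
    "\<forall>u\<in>F. g u = f u"
    by (elim exE conjE)
  have g1: "g (h 1) = x1" and g2: "g (h 2) = x2" using g(3) f1 f2 unfolding F_def by auto
  have "g (h 3) \<in> M" using g(1) hM bij_betw_apply by metis
  moreover have "d x1 (g (h 3)) = d x0 x2" using g(2) hM g1 h13 n_def by metis
  moreover have "d x2 (g (h 3)) = d x0 x1" using g(2) hM g2 h23 s_def by metis
  ultimately show ?thesis by blast
qed

theorem lemma3p2:
  fixes D :: "real set" and M :: "'a set" and d :: "'a \<Rightarrow> 'a \<Rightarrow> real" and r :: real
  assumes "finite D" and "0 \<in> D" and "\<forall>x\<in>D. 0 \<le> x"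
    and "universal_dset D"
    and "in_UD D M d"
    and "r \<in> D" and "r > 0"
    and "\<forall>x\<in>D. \<not> (r < x \<and> x \<le> 2 * r)"
  defines "R \<equiv> {(x, y). x \<in> M \<and> y \<in> M \<and> d x y \<le> r}"
  shows "equiv M R \<and>
    (\<forall>A\<in>M // R. \<forall>B\<in>M // R. A \<noteq> B \<longrightarrow>
       (\<forall>a\<in>A. \<forall>n\<in>dAB d A B. n > 2 * r \<and> (\<exists>b\<in>B. d a b = n)) \<and>
       Max (dAB d A B) - Min (dAB d A B) \<le> r)"
proof -
  have met: "metric_on M d" and ds: "dist_set M d = D" using assms(5) unfolding in_UD_def by blast+
  note nn = met_facts(1)[OF met] and z = met_facts(2)[OF met] and sy = met_facts(3)[OF met]
    and tr = met_facts(4)[OF met]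
  have inD: "\<And>x y. x \<in> M \<Longrightarrow> y \<in> M \<Longrightarrow> d x y \<in> D" using ds unfolding dist_set_def by blast
  have key: "\<And>x y. x \<in> M \<Longrightarrow> y \<in> M \<Longrightarrow> d x y \<le> 2*r \<Longrightarrow> d x y \<le> r"
    using inD assms(8) by fastforce
  have eq: "equiv M R"
  proof (rule equivI)
    show "R \<subseteq> M \<times> M" unfolding R_def by auto
    show "refl_on M R" 
      proof (rule refl_onI)
        fix x assume "x \<in> M" then have "d x x = 0" using z by simp
        then show "(x,x) \<in> R" using \<open>x \<in> M\<close> assms(7) unfolding R_def by simp
      qed
    show "sym R" unfolding sym_def R_def using sy by auto
    show "trans R"
    proof (rule transI)
      fix x y w assume a: "(x,y) \<in> R" "(y,w) \<in> R"
      then have M: "x \<in> M" "y \<in> M" "w \<in> M" and l: "d x y \<le> r" "d y w \<le> r"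
        unfolding R_def by auto
      have "d x w \<le> 2*r" using tr[OF M(1) M(2) M(3)] l by linarith
      then show "(x,w) \<in> R" using key[OF M(1) M(3)] M unfolding R_def by auto
    qed
  qed
  have sub: "\<And>A. A \<in> M // R \<Longrightarrow> A \<subseteq> M" 
    unfolding quotient_def R_def by auto
  have same: "\<And>A a a'. A \<in> M // R \<Longrightarrow> a \<in> A \<Longrightarrow> a' \<in> A \<Longrightarrow> d a a' \<le> r"
    using quotient_eq_iff[OF eq] unfolding R_def by blast
  have diff: "\<And>A B a b. A \<in> M // R \<Longrightarrow> B \<in> M // R \<Longrightarrow> A \<noteq> B \<Longrightarrow> a \<in> A \<Longrightarrow> b \<in> B \<Longrightarrow> d a b > 2*r"
  proof -
    fix A B a b assume h: "A \<in> M // R" "B \<in> M // R" "A \<noteq> B" "a \<in> A" "b \<in> B"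
    then have "(a,b) \<notin> R" using quotient_eq_iff[OF eq] by blast
    moreover have "a \<in> M" "b \<in> M" using sub h by auto
    ultimately show "d a b > 2*r" using key unfolding R_def by force
  qed
  have part2: "\<And>A B a n. A \<in> M // R \<Longrightarrow> B \<in> M // R \<Longrightarrow> A \<noteq> B \<Longrightarrow> a \<in> A \<Longrightarrow> n \<in> dAB d A B
      \<Longrightarrow> n > 2*r \<and> (\<exists>b\<in>B. d a b = n)"
  proof -
    fix A B a n assume h: "A \<in> M // R" "B \<in> M // R" "A \<noteq> B" "a \<in> A" "n \<in> dAB d A B"
    then obtain a' b' where ab: "a' \<in> A" "b' \<in> B" "n = d a' b'" unfolding dAB_def by blast
    have M: "a \<in> M" "a' \<in> M" "b' \<in> M" using sub h ab by auto
    have gt: "n > 2*r" using diff h ab by blast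
    have "\<exists>b\<in>B. d a b = n"
    proof (cases "a = a'")
      case True then show ?thesis using ab by blast
    next
      case False
      have "d a b' > 2*r" using diff h ab by blast
      then have "d a b' \<noteq> 0" "d a' b' \<noteq> 0" using gt ab assms(7) by linarith+
      then have "a \<noteq> b'" "a' \<noteq> b'" using z M by auto
      then obtain y where y: "y \<in> M" "d a y = d a' b'" "d b' y = d a' a"
        using four_point[OF assms(5) M(2) M(1) M(3)] False by metis
      have "d b' y \<le> r" using y(3) same h ab by simp
      then have "(b', y) \<in> R" using y M unfolding R_def by auto
      then have "y \<in> B" using h(2) ab(2) eq
        by (metis equiv_class_eq_iff quotient_eq_iff quotientE Image_singleton_iff)
      then show ?thesis using y ab by metis
    qed
    then show "n > 2*r \<and> (\<exists>b\<in>B. d a b = n)" using gt by blast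
  qed
  have part3: "\<And>A B. A \<in> M // R \<Longrightarrow> B \<in> M // R \<Longrightarrow> A \<noteq> B \<Longrightarrow> Max (dAB d A B) - Min (dAB d A B) \<le> r"
  proof -
    fix A B assume h: "A \<in> M // R" "B \<in> M // R" "A \<noteq> B"
    have sD: "dAB d A B \<subseteq> D" using sub h inD unfolding dAB_def by blast
    have fin: "finite (dAB d A B)" using sD assms(1) finite_subset by blast
    have "A \<noteq> {}" "B \<noteq> {}" using h eq in_quotient_imp_non_empty by blast+
    then have ne: "dAB d A B \<noteq> {}" unfolding dAB_def by blast
    have "Min (dAB d A B) \<in> dAB d A B" using fin ne by simp
    then obtain a2 b2 where m: "a2 \<in> A" "b2 \<in> B" "Min (dAB d A B) = d a2 b2"
      unfolding dAB_def by blast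
    have "Max (dAB d A B) \<in> dAB d A B" using fin ne by simp
    then obtain b where b: "b \<in> B" "d a2 b = Max (dAB d A B)" using part2 h m by blast
    have "a2 \<in> M" "b2 \<in> M" "b \<in> M" using sub h m b by blast+
    then have "d a2 b \<le> d a2 b2 + d b2 b" using tr by blast
    moreover have "d b2 b \<le> r" using same h m b by blast
    ultimately show "Max (dAB d A B) - Min (dAB d A B) \<le> r" using m b by linarith
  qed
  show ?thesis using eq part2 part3 by blast
qed

end
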